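(* Let $a,\varepsilon\in\mathbb{R}$ and consider the piecewise smooth vector field on $\mathbb{R}^3$ $$Z(x,y,z)=\begin{cases}X_-(x,y,z), & x^2+y^2+z^2\le 1,\\ X_+(x,y,z), & x^2+y^2+z^2\ge 1,\end{cases}$$ with $X_-(x,y,z)=(y,\,-ay+x+az+\varepsilon,\,x)$ and $X_+(x,y,z)=(y,\,-ay-x-az+\varepsilon,\,x)$, with dynamics on the unit sphere $S^2$ given by Filippov's convention. (This is the first-order form, with $x=\dot z$, $y=\ddot z$, of $\dddot{z}+a\ddot{z}+b\dot{z}+abz=\varepsilon$ with $b=\mathrm{sign}(z^2+\dot z^2+\ddot z^2-1)$.) If $$\frac{|a|}{\sqrt{2}}<\varepsilon<|a| \quad\text{or}\quad -|a|<\varepsilon<-\frac{|a|}{\sqrt{2}},$$ then the system admits a pseudo-orbit.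
   Context: Write $h(x,y,z)=x^2+y^2+z^2-1$, so $S^2=h^{-1}(0)$ is the discontinuity surface. Let $\varphi_\pm(t,p)$ denote the flow of the smooth vector field $X_\pm$ (extended to all of $\mathbb{R}^3$) starting at $p$. For a vector field $X$, $Xh(p)=\langle X(p),\nabla h(p)\rangle$; a point $p\in S^2$ with $X_+h(p)=0$ or $X_-h(p)=0$ is a tangency point. A pseudo-orbit (closed pseudo-trajectory) of $Z$ means a closed curve formed by two trajectory arcs meeting $S^2$ in exactly two distinct points $P,Q$: there exist nonzero times $t_-,t_+$ of the same sign with $\varphi_-(t_-,P)=Q$, $\varphi_+(t_+,P)=Q$, such that $\varphi_-(t,P)$ lies in the open unit ball for all $t$ strictly between $0$ and $t_-$, and $\varphi_+(t,P)$ lies outside the closed unit ball for all $t$ strictly between $0$ and $t_+$. *)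

theory Defs
  imports "HOL-Analysis.Analysis"
begin

type_synonym pt = "real \<times> real \<times> real"

definition h :: "pt \<Rightarrow> real" where
  "h p = (case p of (x, y, z) \<Rightarrow> x^2 + y^2 + z^2 - 1)"

definition Xminus :: "real \<Rightarrow> real \<Rightarrow> pt \<Rightarrow> pt" where
  "Xminus a \<epsilon> p = (case p of (x, y, z) \<Rightarrow> (y, - a * y + x + a * z + \<epsilon>, x))"

definition Xplus :: "real \<Rightarrow> real \<Rightarrow> pt \<Rightarrow> pt" where
  "Xplus a \<epsilon> p = (case p of (x, y, z) \<Rightarrow> (y, - a * y - x - a * z + \<epsilon>, x))"

definition flow :: "(pt \<Rightarrow> pt) \<Rightarrow> real \<Rightarrow> pt \<Rightarrow> pt" where
  "flow X t p = (THE \<gamma>. \<gamma> 0 = p \<and> (\<forall>s. (\<gamma> has_vector_derivative X (\<gamma> s)) (at s))) t"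

definition between0 :: "real \<Rightarrow> real \<Rightarrow> bool" where
  "between0 t s \<longleftrightarrow> (0 < s \<and> s < t) \<or> (t < s \<and> s < 0)"

definition has_pseudo_orbit :: "(pt \<Rightarrow> pt) \<Rightarrow> (pt \<Rightarrow> pt) \<Rightarrow> bool" where
  "has_pseudo_orbit Xm Xp \<longleftrightarrow>
     (\<exists>P Q tm tp. h P = 0 \<and> h Q = 0 \<and> P \<noteq> Q \<and> tm \<noteq> 0 \<and> tp \<noteq> 0 \<and>
        ((tm > 0 \<and> tp > 0) \<or> (tm < 0 \<and> tp < 0)) \<and>
        flow Xm tm P = Q \<and> flow Xp tp P = Q \<and>
        (\<forall>t. between0 tm t \<longrightarrow> h (flow Xm t P) < 0) \<and>
        (\<forall>t. between0 tp t \<longrightarrow> h (flow Xp t P) > 0))"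

end

theory Submission
  imports Defs
begin


lemma g_deriv:
  fixes d :: "real \<Rightarrow> 'a::real_inner"
  assumes "(d has_vector_derivative d') (at s)"
  shows "((\<lambda>s. inner (d s) (d s)) has_real_derivative 2 * inner (d s) d') (at s)"
proof -
  have "((\<lambda>s. inner (d s) (d s)) has_derivative (\<lambda>h. inner (d s) (h *\<^sub>R d') + inner (h *\<^sub>R d') (d s))) (at s)"
    using assms unfolding has_vector_derivative_def by (intro has_derivative_inner) auto
  moreover have "(\<lambda>h. inner (d s) (h *\<^sub>R d') + inner (h *\<^sub>R d') (d s)) = (*) (2 * inner (d s) d')"
    by (auto simp: fun_eq_iff inner_commute algebra_simps)
  ultimately show ?thesis by (simp add: has_field_derivative_def)
qed

lemma ode_unique:
  fixes X :: "'a::real_inner \<Rightarrow> 'a"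
  assumes L: "\<And>u v. \<bar>inner (u - v) (X u - X v)\<bar> \<le> L * inner (u - v) (u - v)"
    and g1: "\<forall>s. (g1 has_vector_derivative X (g1 s)) (at s)"
    and g2: "\<forall>s. (g2 has_vector_derivative X (g2 s)) (at s)"
    and e0: "g1 0 = g2 0"
  shows "g1 t = g2 t"
proof -
  define d where "d s = g1 s - g2 s" for s
  define g where "g s = inner (d s) (d s)" for s
  define D where "D s = 2 * inner (d s) (X (g1 s) - X (g2 s))" for s
  have dg: "(g has_real_derivative D s) (at s)" for s
    unfolding g_def D_def d_def
    by (rule g_deriv, rule has_vector_derivative_diff) (use g1 g2 in auto)
  have Db: "\<bar>D s\<bar> \<le> 2 * L * g s" for s
    using L[of "g1 s" "g2 s"] unfolding D_def g_def d_def by simp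
  have g0: "g 0 = 0" using e0 by (simp add: g_def d_def)
  have gnn: "g s \<ge> 0" for s by (simp add: g_def)
  have "g t \<le> 0"
  proof (cases "t \<ge> 0")
    case True
    define k where "k s = exp (- (2*L) * s) * g s" for s
    have "k t \<le> k 0"
    proof (rule DERIV_nonpos_imp_nonincreasing[OF True])
      fix x
      have "(k has_real_derivative (exp (- (2*L) * x) * (- (2*L)) * g x + exp (- (2*L) * x) * D x)) (at x)"
        unfolding k_def by (auto intro!: derivative_eq_intros dg)
      moreover have "exp (- (2*L) * x) * (- (2*L)) * g x + exp (- (2*L) * x) * D x \<le> 0"
      proof -
        have "D x - 2*L * g x \<le> 0" using Db[of x] by linarith
        hence "exp (- (2*L) * x) * (D x - 2*L * g x) \<le> 0" by (simp add: mult_nonneg_nonpos)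
        thus ?thesis by (simp add: algebra_simps)
      qed
      ultimately show "\<exists>y. (k has_real_derivative y) (at x) \<and> y \<le> 0" by blast
    qed
    hence "exp (- (2*L) * t) * g t \<le> 0" using g0 unfolding k_def by simp
    thus ?thesis by (simp add: mult_le_0_iff)
  next
    case False
    define k where "k s = exp ((2*L) * s) * g s" for s
    have "k t \<le> k 0"
    proof (rule DERIV_nonneg_imp_nondecreasing[of t 0 k])
      show "t \<le> 0" using False by simp
      fix x
      have "(k has_real_derivative (exp ((2*L) * x) * (2*L) * g x + exp ((2*L) * x) * D x)) (at x)"
        unfolding k_def by (auto intro!: derivative_eq_intros dg)
      moreover have "exp ((2*L) * x) * (2*L) * g x + exp ((2*L) * x) * D x \<ge> 0"
      proof -
        have "D x + 2*L * g x \<ge> 0" using Db[of x] by linarith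
        hence "exp ((2*L) * x) * (D x + 2*L * g x) \<ge> 0" by simp
        thus ?thesis by (simp add: algebra_simps)
      qed
      ultimately show "\<exists>y. (k has_real_derivative y) (at x) \<and> y \<ge> 0" by blast
    qed
    hence "exp ((2*L) * t) * g t \<le> 0" using g0 by (simp add: k_def)
    thus ?thesis by (simp add: mult_le_0_iff)
  qed
  hence "g t = 0" using gnn[of t] by linarith
  thus ?thesis by (simp add: g_def d_def)
qed

lemma flow_eq:
  fixes X :: "pt \<Rightarrow> pt"
  assumes L: "\<And>u v. \<bar>inner (u - v) (X u - X v)\<bar> \<le> L * inner (u - v) (u - v)"
    and g: "\<forall>s. (\<gamma> has_vector_derivative X (\<gamma> s)) (at s)" and "\<gamma> 0 = p"
  shows "flow X t p = \<gamma> t"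
proof -
  have "(THE \<gamma>'. \<gamma>' 0 = p \<and> (\<forall>s. (\<gamma>' has_vector_derivative X (\<gamma>' s)) (at s))) = \<gamma>"
  proof (rule the_equality)
    show "\<gamma> 0 = p \<and> (\<forall>s. (\<gamma> has_vector_derivative X (\<gamma> s)) (at s))" using assms by auto
    fix \<gamma>' assume "\<gamma>' 0 = p \<and> (\<forall>s. (\<gamma>' has_vector_derivative X (\<gamma>' s)) (at s))"
    thus "\<gamma>' = \<gamma>" using ode_unique[OF L _ g] assms(3) by (intro ext) auto
  qed
  thus ?thesis by (simp add: flow_def)
qed



lemma amgm2: "\<bar>(u::real) * v\<bar> \<le> (u * u + v * v) / 2"
proof -
  have "0 \<le> (\<bar>u\<bar> - \<bar>v\<bar>) * (\<bar>u\<bar> - \<bar>v\<bar>)" by simp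
  hence "2 * (\<bar>u\<bar> * \<bar>v\<bar>) \<le> u * u + v * v" by (simp add: algebra_simps abs_mult_self_eq)
  thus ?thesis by (simp add: abs_mult)
qed

lemma bound3:
  fixes dx dy dz a :: real
  assumes "q = dx*dy + dy*(sa * a*dy + sb * dx + sc * a*dz) + dz*dx"
    and "\<bar>sa\<bar> = 1" "\<bar>sb\<bar> = 1" "\<bar>sc\<bar> = 1"
  shows "\<bar>q\<bar> \<le> (3 + 3*\<bar>a\<bar>) * (dx*dx + dy*dy + dz*dz)"
proof -
  have e: "q = dx*dy + sa*(a*(dy*dy)) + sb*(dy*dx) + sc*(a*(dy*dz)) + dz*dx"
    using assms(1) by (simp add: algebra_simps)
  have b1: "\<bar>dx*dy\<bar> \<le> (dx*dx + dy*dy)/2" by (rule amgm2)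
  have b2: "\<bar>sb*(dy*dx)\<bar> \<le> (dx*dx + dy*dy)/2" using amgm2[of dy dx] assms by (simp add: abs_mult)
  have b3: "\<bar>dz*dx\<bar> \<le> (dx*dx + dz*dz)/2" by (rule amgm2[of dz dx, simplified add.commute])
  have b4: "\<bar>sa*(a*(dy*dy))\<bar> = \<bar>a\<bar> * (dy*dy)" using assms by (simp add: abs_mult)
  have b5: "\<bar>sc*(a*(dy*dz))\<bar> \<le> \<bar>a\<bar> * ((dy*dy + dz*dz)/2)"
  proof -
    have "\<bar>a\<bar> * \<bar>dy*dz\<bar> \<le> \<bar>a\<bar> * ((dy*dy + dz*dz)/2)" by (rule mult_left_mono[OF amgm2]) simp
    thus ?thesis using assms by (simp add: abs_mult)
  qed
  have "\<bar>q\<bar> \<le> \<bar>dx*dy\<bar> + \<bar>sa*(a*(dy*dy))\<bar> + \<bar>sb*(dy*dx)\<bar> + \<bar>sc*(a*(dy*dz))\<bar> + \<bar>dz*dx\<bar>"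
    unfolding e by linarith
  also have "\<dots> \<le> (dx*dx + dy*dy)/2 + \<bar>a\<bar> * (dy*dy) + (dx*dx + dy*dy)/2 + \<bar>a\<bar> * ((dy*dy + dz*dz)/2) + (dx*dx + dz*dz)/2"
    using b1 b2 b3 b4 b5 by linarith
  also have "\<dots> \<le> (3 + 3*\<bar>a\<bar>) * (dx*dx + dy*dy + dz*dz)"
  proof -
    have gen: "\<And>X Y Z (aa::real). 0 \<le> X \<Longrightarrow> 0 \<le> Y \<Longrightarrow> 0 \<le> Z \<Longrightarrow> 0 \<le> aa \<Longrightarrow>
      (X + Y)/2 + aa * Y + (X + Y)/2 + aa * ((Y + Z)/2) + (X + Z)/2 \<le> (3 + 3*aa) * (X + Y + Z)"
    proof -
      fix X Y Z aa :: real assume h: "0 \<le> X" "0 \<le> Y" "0 \<le> Z" "0 \<le> aa"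
      have e: "(3 + 3*aa) * (X + Y + Z) - ((X + Y)/2 + aa * Y + (X + Y)/2 + aa * ((Y + Z)/2) + (X + Z)/2)
         = (3*X + 4*Y + 5*Z + 6*(aa*X) + 3*(aa*Y) + 5*(aa*Z)) / 2"
        by (simp add: field_simps)
      have "0 \<le> (3*X + 4*Y + 5*Z + 6*(aa*X) + 3*(aa*Y) + 5*(aa*Z)) / 2" using h by simp
      thus "(X + Y)/2 + aa * Y + (X + Y)/2 + aa * ((Y + Z)/2) + (X + Z)/2 \<le> (3 + 3*aa) * (X + Y + Z)" using e by linarith
    qed
    show ?thesis by (rule gen) auto
  qed
  finally show ?thesis .
qed

lemma lipm: "\<bar>inner (u - v) (Xminus a e u - Xminus a e v)\<bar> \<le> (3 + 3*\<bar>a\<bar>) * inner (u - v) (u - v)"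
proof -
  obtain x1 y1 z1 x2 y2 z2 where u: "u = (x1,y1,z1)" and v: "v = (x2,y2,z2)" by (cases u, cases v) auto
  have "\<bar>inner (u - v) (Xminus a e u - Xminus a e v)\<bar> \<le> (3 + 3*\<bar>a\<bar>) * ((x1-x2)*(x1-x2) + (y1-y2)*(y1-y2) + (z1-z2)*(z1-z2))"
    by (rule bound3[where dx="x1-x2" and dy="y1-y2" and sa="-1" and a=a and sb=1 and dz="z1-z2" and sc=1]) (auto simp: u v Xminus_def algebra_simps)
  moreover have "inner (u - v) (u - v) = (x1-x2)*(x1-x2) + (y1-y2)*(y1-y2) + (z1-z2)*(z1-z2)" by (simp add: u v)
  ultimately show ?thesis by simp
qed

lemma lipp: "\<bar>inner (u - v) (Xplus a e u - Xplus a e v)\<bar> \<le> (3 + 3*\<bar>a\<bar>) * inner (u - v) (u - v)"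
proof -
  obtain x1 y1 z1 x2 y2 z2 where u: "u = (x1,y1,z1)" and v: "v = (x2,y2,z2)" by (cases u, cases v) auto
  have "\<bar>inner (u - v) (Xplus a e u - Xplus a e v)\<bar> \<le> (3 + 3*\<bar>a\<bar>) * ((x1-x2)*(x1-x2) + (y1-y2)*(y1-y2) + (z1-z2)*(z1-z2))"
    by (rule bound3[where dx="x1-x2" and dy="y1-y2" and sa="-1" and a=a and sb="-1" and dz="z1-z2" and sc="-1"]) (auto simp: u v Xplus_def algebra_simps)
  moreover have "inner (u - v) (u - v) = (x1-x2)*(x1-x2) + (y1-y2)*(y1-y2) + (z1-z2)*(z1-z2)" by (simp add: u v)
  ultimately show ?thesis by simp
qed



definition gm :: "real \<Rightarrow> real \<Rightarrow> real \<Rightarrow> real \<Rightarrow> pt" where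
  "gm A B c t = (A * exp t - B * exp(-t), A * exp t + B * exp(-t), A * exp t + B * exp(-t) - c)"

definition gp :: "real \<Rightarrow> real \<Rightarrow> real \<Rightarrow> pt" where
  "gp p c t = (p * cos t + c * sin t, c * cos t - p * sin t, c + p * sin t - c * cos t)"

lemma rv: "(f has_real_derivative y) (at s) \<Longrightarrow> (f has_vector_derivative y) (at s)"
  by (simp add: has_real_derivative_iff_has_vector_derivative)

lemma gm_deriv:
  assumes "a  *  (A + B) = e"
  shows "(gm A B (A+B) has_vector_derivative Xminus a e (gm A B (A+B) s)) (at s)"
proof -
  have d1: "((\<lambda>s. A * exp s - B * exp(-s)) has_vector_derivative (A * exp s + B * exp(-s))) (at s)"
    by (rule rv) (auto intro!: derivative_eq_intros)
  have d2: "((\<lambda>s. A * exp s + B * exp(-s)) has_vector_derivative (A * exp s - B * exp(-s))) (at s)"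
    by (rule rv) (auto intro!: derivative_eq_intros)
  have d3: "((\<lambda>s. A * exp s + B * exp(-s) - (A+B)) has_vector_derivative (A * exp s - B * exp(-s))) (at s)"
    by (rule rv) (auto intro!: derivative_eq_intros)
  have "(gm A B (A+B) has_vector_derivative (A * exp s + B * exp(-s), A * exp s - B * exp(-s), A * exp s - B * exp(-s))) (at s)"
    unfolding gm_def[abs_def] by (intro has_vector_derivative_Pair d1 d2 d3)
  moreover have "Xminus a e (gm A B (A+B) s) = (A * exp s + B * exp(-s), A * exp s - B * exp(-s), A * exp s - B * exp(-s))"
    using assms by (simp add: Xminus_def gm_def algebra_simps)
  ultimately show ?thesis by simp
qed

lemma gp_deriv:
  assumes "a  *  c = e"
  shows "(gp p c has_vector_derivative Xplus a e (gp p c s)) (at s)"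
proof -
  have d1: "((\<lambda>s. p * cos s + c * sin s) has_vector_derivative (c * cos s - p * sin s)) (at s)"
    by (rule rv) (auto intro!: derivative_eq_intros)
  have d2: "((\<lambda>s. c * cos s - p * sin s) has_vector_derivative (-(p * cos s + c * sin s))) (at s)"
    by (rule rv) (auto intro!: derivative_eq_intros)
  have d3: "((\<lambda>s. c + p * sin s - c * cos s) has_vector_derivative (p * cos s + c * sin s)) (at s)"
    by (rule rv) (auto intro!: derivative_eq_intros)
  have "(gp p c has_vector_derivative (c * cos s - p * sin s, -(p * cos s + c * sin s), p * cos s + c * sin s)) (at s)"
    unfolding gp_def[abs_def] by (intro has_vector_derivative_Pair d1 d2 d3)
  moreover have "Xplus a e (gp p c s) = (c * cos s - p * sin s, -(p * cos s + c * sin s), p * cos s + c * sin s)"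
    using assms by (simp add: Xplus_def gp_def algebra_simps)
  ultimately show ?thesis by simp
qed

lemma h_gm_gen:
  fixes A B c p e f :: real
  assumes "A + B = c" "A - B = p" "p * p = 1 - c * c" "e * f = 1"
  shows "(A * e - B * f)^2 + (A * e + B * f)^2 + (A * e + B * f - c)^2 - 1 = (A * e + B * f - c) * (3 * (A * e + B * f) + c)"
proof -
  have AB: "4 * A * B = 2 * c * c - 1"
  proof -
    have "4 * A * B = (A+B) * (A+B) - (A-B) * (A-B)" by (simp add: algebra_simps)
    thus ?thesis using assms by simp
  qed
  have x2: "(A * e - B * f)^2 = (A * e + B * f)^2 - 4 * A * B * (e * f)" by (simp add: power2_eq_square algebra_simps)
  have "(A * e - B * f)^2 = (A * e + B * f)^2 - (2 * c * c - 1)" unfolding x2 AB assms(4) by simp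
  moreover have "(A * e + B * f)^2 - (2 * c * c - 1) + (A * e + B * f)^2 + (A * e + B * f - c)^2 - 1 = (A * e + B * f - c) * (3 * (A * e + B * f) + c)"
    by (simp add: power2_eq_square algebra_simps)
  ultimately show ?thesis by simp
qed

lemma ef: "exp (t::real) * exp (- t) = 1" by (rule exp_minus_inverse)

lemma h_gm:
  assumes "A + B = c" "A - B = p" "p * p = 1 - c * c"
  shows "h (gm A B c t) = (A * exp t + B * exp(-t) - c) * (3 * (A * exp t + B * exp(-t)) + c)"
  unfolding h_def gm_def using h_gm_gen[OF assms ef[of t]] by simp

lemma wc_gen:
  fixes A B e f :: real
  assumes "e * f = 1"
  shows "(A * e + B * f - (A + B)) * e = (e - 1) * (A * e - B)"
proof -
  have "(A * e + B * f - (A + B)) * e = A * e * e + B * (e * f) - (A + B) * e" by (simp add: algebra_simps)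
  also have "\<dots> = (e - 1) * (A * e - B)" using assms by (simp add: algebra_simps)
  finally show ?thesis .
qed

lemma wc_sign:
  "(A * exp t + B * exp(-t) - (A + B)) * exp t = (exp t - 1) * (A * exp (t::real) - B)"
  by (rule wc_gen[OF ef])

lemma h_gp:
  assumes "p * p + c * c = 1"
  shows "h (gp p c t) = (c + p * sin t - c * cos t)^2"
proof -
  have gen: "\<And>S C::real. (p * C + c * S)^2 + (c * C - p * S)^2 = (p * p + c * c) * (S^2 + C^2)"
    by (simp add: power2_eq_square algebra_simps)
  have "(p * cos t + c * sin t)^2 + (c * cos t - p * sin t)^2 = (p * p + c * c) * ((sin t)^2 + (cos t)^2)"
    by (rule gen)
  also have "\<dots> = 1" using assms by simp
  finally have e: "(p * cos t + c * sin t)^2 + (c * cos t - p * sin t)^2 = 1" .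
  show ?thesis unfolding h_def gp_def using e by simp
qed

lemma z_gp:
  fixes t :: real
  assumes "sin al = c" "cos al = p"
  shows "c + p * sin t - c * cos t = 2  *  sin (t/2)  *  cos (t/2 - al)"
proof -
  have "sin t = 2  *  sin (t/2)  *  cos (t/2)" using sin_double[of "t/2"] by simp
  moreover have "cos t = 1 - 2  *  (sin (t/2) * sin (t/2))" using cos_double_sin[of "t/2"] by (simp add: power2_eq_square)
  moreover have "cos (t/2 - al) = cos (t/2)  *  p + sin (t/2)  *  c" using assms by (simp add: cos_diff)
  ultimately show ?thesis by (simp only:) (simp add: algebra_simps)
qed



lemma assemble:
  assumes "h P = 0" "h Q = 0" "P \<noteq> Q" "(tm > 0 \<and> tp > 0) \<or> (tm < 0 \<and> tp < 0)"
   "flow Xm tm P = Q" "flow Xp tp P = Q"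
   "\<And>t. between0 tm t \<Longrightarrow> h (flow Xm t P) < 0" "\<And>t. between0 tp t \<Longrightarrow> h (flow Xp t P) > 0"
  shows "has_pseudo_orbit Xm Xp"
  unfolding has_pseudo_orbit_def
  apply (rule exI[of _ P], rule exI[of _ Q], rule exI[of _ tm], rule exI[of _ tp])
  using assms by auto

lemma gp_Q:
  assumes "cos T = c * c - p * p" "sin T = - (2 * c * p)" "p * p + c * c = 1"
  shows "gp p c T = (- p, c, 0)"
proof -
  have "p * cos T + c * sin T = p * (c * c - p * p) + c * (- (2 * c * p))" by (simp only: assms(1,2))
  also have "\<dots> = - p * (p * p + c * c)" by (simp add: algebra_simps)
  finally have 1: "p * cos T + c * sin T = - p * (p * p + c * c)" .
  have "c * cos T - p * sin T = c * (c * c - p * p) - p * (- (2 * c * p))" by (simp only: assms(1,2))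
  also have "\<dots> = c * (p * p + c * c)" by (simp add: algebra_simps)
  finally have 2: "c * cos T - p * sin T = c * (p * p + c * c)" .
  have "c + p * sin T - c * cos T = c + p * (- (2 * c * p)) - c * (c * c - p * p)" by (simp only: assms(1,2))
  also have "\<dots> = c - c * (p * p + c * c)" by (simp add: algebra_simps)
  finally have 3: "c + p * sin T - c * cos T = c - c * (p * p + c * c)" .
  show ?thesis using 1 2 3 assms(3) by (simp add: gp_def)
qed

lemma main_c:
  fixes a e c :: real
  assumes a0: "a \<noteq> 0" and ac: "a * c = e" and c1: "1/2 < c * c" and c2: "c * c < 1"
  shows "has_pseudo_orbit (Xminus a e) (Xplus a e)"
proof -
  define p where "p = sqrt (1 - c * c)"
  have p0: "0 < p" using c2 by (simp add: p_def)
  have pp: "p * p = 1 - c * c" using c2 unfolding p_def by simp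
  have plc: "p < \<bar>c\<bar>"
  proof (rule power2_less_imp_less)
    show "p\<^sup>2 < \<bar>c\<bar>\<^sup>2" using pp c1 by (simp add: power2_eq_square)
  qed simp
  have cab: "\<bar>c\<bar> < 1" using c2 abs_square_less_1[of c] by (simp add: power2_eq_square)
  define A where "A = (c + p) / 2"
  define B where "B = (c - p) / 2"
  have ApB: "A + B = c" and AmB: "A - B = p" by (simp_all add: A_def B_def field_simps)
  define al where "al = arcsin c"
  have sal: "sin al = c" using cab by (simp add: al_def)
  have cal: "cos al = p" using cab by (simp add: al_def cos_arcsin p_def power2_eq_square)
  have alb: "- (pi/2) < al \<and> al < pi/2" unfolding al_def using cab by (intro arcsin_lt_bounded) auto
  define P where "P = (p, c, 0::real)"
  define Q where "Q = (- p, c, 0::real)"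
  have FM: "flow (Xminus a e) t P = gm A B c t" for t
  proof -
    have aAB: "a * (A + B) = e" using ac ApB by simp
    have d: "\<forall>s. (gm A B (A+B) has_vector_derivative Xminus a e (gm A B (A+B) s)) (at s)"
      using gm_deriv[OF aAB] by blast
    have i: "gm A B (A+B) 0 = P" by (simp add: gm_def P_def AmB ApB)
    have "flow (Xminus a e) t P = gm A B (A+B) t" by (rule flow_eq[OF lipm d i])
    thus ?thesis using ApB by simp
  qed
  have FP: "flow (Xplus a e) t P = gp p c t" for t
  proof -
    have d: "\<forall>s. (gp p c has_vector_derivative Xplus a e (gp p c s)) (at s)"
      using gp_deriv[OF ac] by blast
    have i: "gp p c 0 = P" by (simp add: gp_def P_def)
    show ?thesis by (rule flow_eq[OF lipp d i])
  qed
  have hP: "h P = 0" and hQ: "h Q = 0" using pp by (simp_all add: h_def P_def Q_def power2_eq_square)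
  have PQ: "P \<noteq> Q" using p0 by (simp add: P_def Q_def)
  have ppc: "p * p + c * c = 1" using pp by simp
  have ABpos: "A * B > 0"
  proof -
    have "A * B = (c * c - p * p) / 4" by (simp add: A_def B_def field_simps)
    thus ?thesis using pp c1 by simp
  qed
  have A0: "A \<noteq> 0" and B0: "B \<noteq> 0" using ABpos by auto
  define tm where "tm = ln (B / A)"
  have BA: "B / A > 0" using ABpos by (auto simp add: zero_less_divide_iff zero_less_mult_iff)
  have etm: "exp tm = B / A" using BA by (simp add: tm_def)
  have GM: "gm A B c tm = Q"
  proof -
    have "exp (- tm) = A / B" using etm by (simp add: exp_minus)
    hence 1: "B * exp (- tm) = A" using B0 by simp
    have 2: "A * exp tm = B" using etm A0 by simp
    have "gm A B c tm = (B - A, B + A, B + A - c)" unfolding gm_def 1 2 by simp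
    thus ?thesis using ApB AmB by (simp add: Q_def)
  qed
  have cos2: "cos (2 * al) = p * p - c * c" using sal cal by (simp add: cos_double power2_eq_square)
  have sin2: "sin (2 * al) = 2 * c * p" using sal cal by (simp add: sin_double)
  have hgm: "h (gm A B c t) = (A * exp t + B * exp(-t) - c) * (3 * (A * exp t + B * exp(-t)) + c)" for t
    by (rule h_gm[OF ApB AmB pp])
  have ws: "(A * exp t + B * exp(-t) - c) * exp t = (exp t - 1) * (A * exp t - B)" for t
    using wc_sign[of A t B] ApB by simp
  have hgp: "h (gp p c t) = (2 * sin (t/2) * cos (t/2 - al))^2" for t
    using h_gp[OF ppc, of t] z_gp[OF sal cal, of t] by simp
  have exm: "exp (-t) > 0" for t :: real by simp
  show ?thesis
  proof (cases "c < 0")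
    case True
    have An: "A < 0" using plc True by (simp add: A_def)
    have Bn: "B < 0" using p0 True by (simp add: B_def)
    have BA1: "B / A > 1" using An AmB p0 by (simp add: less_divide_eq_1_neg)
    have tm0: "tm > 0" unfolding tm_def using BA1 by (rule ln_gt_zero)
    have al0: "al < 0" unfolding al_def using arcsin_less_arcsin[of c 0] True cab by simp
    define tp where "tp = pi + 2 * al"
    have tp0: "tp > 0" using alb by (simp add: tp_def)
    have GP: "gp p c tp = Q" unfolding Q_def
      by (rule gp_Q[OF _ _ ppc]) (simp_all add: tp_def cos2 sin2)
    show ?thesis
    proof (rule assemble[OF hP hQ PQ, of tm tp])
      show "0 < tm \<and> 0 < tp \<or> tm < 0 \<and> tp < 0" using tm0 tp0 by simp
      show "flow (Xminus a e) tm P = Q" using FM GM by simp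
      show "flow (Xplus a e) tp P = Q" using FP GP by simp
    next
      fix t assume "between0 tm t"
      hence t: "0 < t" "t < tm" using tm0 by (auto simp: between0_def)
      have e1: "exp t > 1" using t by simp
      have e2: "exp t < B / A" using t etm by (metis exp_less_cancel_iff)
      have "A * exp t > A * (B / A)" using e2 An by (rule mult_strict_left_mono_neg)
      hence ab: "A * exp t - B > 0" using A0 by simp
      have "(A * exp t + B * exp(-t) - c) * exp t > 0" unfolding ws using e1 ab by simp
      hence wc: "A * exp t + B * exp(-t) - c > 0" by (simp add: zero_less_mult_iff)
      have "A * exp t < 0" using An by (simp add: mult_neg_pos)
      moreover have "B * exp (-t) < 0" using Bn by (simp add: mult_neg_pos)
      ultimately have "3 * (A * exp t + B * exp(-t)) + c < 0" using True by simp
      thus "h (flow (Xminus a e) t P) < 0" unfolding FM hgm using wc by (simp add: mult_pos_neg)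
    next
      fix t assume "between0 tp t"
      hence t: "0 < t" "t < tp" using tp0 by (auto simp: between0_def)
      have "sin (t/2) > 0" using t alb by (intro sin_gt_zero) (auto simp: tp_def)
      moreover have "cos (t/2 - al) > 0" using t alb al0 by (intro cos_gt_zero_pi) (auto simp: tp_def)
      ultimately show "h (flow (Xplus a e) t P) > 0" unfolding FP hgp by simp
    qed
  next
    case False
    hence cp: "c > 0" using c1 by (cases "c = 0") auto
    have Ap: "A > 0" using p0 cp by (simp add: A_def)
    have Bp: "B > 0" using plc cp by (simp add: B_def)
    have BA1: "B / A < 1" using Ap AmB p0 by simp
    have tm0: "tm < 0" unfolding tm_def using BA BA1 by (rule ln_less_zero)
    have al0: "al > 0" unfolding al_def using arcsin_less_arcsin[of 0 c] cp cab by simp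
    define tp where "tp = - pi + 2 * al"
    have tp0: "tp < 0" using alb by (simp add: tp_def)
    have GP: "gp p c tp = Q" unfolding Q_def
      by (rule gp_Q[OF _ _ ppc]) (simp_all add: tp_def cos2 sin2)
    show ?thesis
    proof (rule assemble[OF hP hQ PQ, of tm tp])
      show "0 < tm \<and> 0 < tp \<or> tm < 0 \<and> tp < 0" using tm0 tp0 by simp
      show "flow (Xminus a e) tm P = Q" using FM GM by simp
      show "flow (Xplus a e) tp P = Q" using FP GP by simp
    next
      fix t assume "between0 tm t"
      hence t: "tm < t" "t < 0" using tm0 by (auto simp: between0_def)
      have e1: "exp t < 1" using t by simp
      have e2: "exp t > B / A" using t etm by (metis exp_less_cancel_iff)
      have "A * exp t > A * (B / A)" using e2 Ap by (rule mult_strict_left_mono)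
      hence ab: "A * exp t - B > 0" using A0 by simp
      have "(A * exp t + B * exp(-t) - c) * exp t < 0" unfolding ws using e1 ab by (simp add: mult_neg_pos)
      hence wc: "A * exp t + B * exp(-t) - c < 0" by (simp add: mult_less_0_iff)
      have "A * exp t > 0" using Ap by simp
      moreover have "B * exp (-t) > 0" using Bp by simp
      ultimately have "3 * (A * exp t + B * exp(-t)) + c > 0" using cp by simp
      thus "h (flow (Xminus a e) t P) < 0" unfolding FM hgm using wc by (simp add: mult_neg_pos)
    next
      fix t assume "between0 tp t"
      hence t: "tp < t" "t < 0" using tp0 by (auto simp: between0_def)
      have "sin (- (t/2)) > 0" using t alb by (intro sin_gt_zero) (auto simp: tp_def)
      hence "sin (t/2) < 0" by simp
      moreover have "cos (t/2 - al) > 0" using t alb al0 by (intro cos_gt_zero_pi) (auto simp: tp_def)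
      ultimately show "h (flow (Xplus a e) t P) > 0" unfolding FP hgp by (simp add: mult_neg_pos)
    qed
  qed
qed



theorem theorem1:
  fixes a \<epsilon> :: real
  assumes "(\<bar>a\<bar> / sqrt 2 < \<epsilon> \<and> \<epsilon> < \<bar>a\<bar>) \<or> (- \<bar>a\<bar> < \<epsilon> \<and> \<epsilon> < - \<bar>a\<bar> / sqrt 2)"
  shows "has_pseudo_orbit (Xminus a \<epsilon>) (Xplus a \<epsilon>)"
proof -
  have k1: "\<bar>a\<bar> / sqrt 2 < \<bar>\<epsilon>\<bar>" and k2: "\<bar>\<epsilon>\<bar> < \<bar>a\<bar>" proof -
    have n: "0 \<le> \<bar>a\<bar> / sqrt 2" by simp
    have gen: "\<And>r. 0 \<le> r \<Longrightarrow> (r < \<epsilon> \<and> \<epsilon> < \<bar>a\<bar>) \<or> (- \<bar>a\<bar> < \<epsilon> \<and> \<epsilon> < - r) \<Longrightarrow> r < \<bar>\<epsilon>\<bar> \<and> \<bar>\<epsilon>\<bar> < \<bar>a\<bar>"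
      by auto
    have H: "(\<bar>a\<bar> / sqrt 2 < \<epsilon> \<and> \<epsilon> < \<bar>a\<bar>) \<or> (- \<bar>a\<bar> < \<epsilon> \<and> \<epsilon> < - (\<bar>a\<bar> / sqrt 2))"
      using assms by (simp only: minus_divide_left)
    show "\<bar>a\<bar> / sqrt 2 < \<bar>\<epsilon>\<bar>" "\<bar>\<epsilon>\<bar> < \<bar>a\<bar>" using gen[OF n H] by blast+
  qed
  have a0: "a \<noteq> 0" using k2 by auto
  have "(\<bar>a\<bar> / sqrt 2)^2 < \<bar>\<epsilon>\<bar>^2" using k1 by (intro power_strict_mono) auto
  hence s1: "a^2 / 2 < \<epsilon>^2" by (simp add: power_divide)
  have s2: "\<epsilon>^2 < a^2" using k2 by (metis abs_le_square_iff not_le power2_abs)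
  define c where "c = \<epsilon> / a"
  have ac: "a * c = \<epsilon>" using a0 by (simp add: c_def)
  have cc: "c * c = \<epsilon>^2 / a^2" by (simp add: c_def power2_eq_square)
  have a2: "a^2 > 0" using a0 by simp
  have c1: "1/2 < c * c" unfolding cc using s1 a2 by (simp add: field_simps)
  have c2: "c * c < 1" unfolding cc using s2 a2 by (simp add: field_simps)
  show ?thesis by (rule main_c[OF a0 ac c1 c2])
qed


end
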